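(* For $\alpha\in\mathbb R\setminus\{0\}$ let $\phi_\alpha:\mathbb R\to\mathbb R$ be $\phi_\alpha(x)=x^\alpha$ for $x\ge0$ and $\phi_\alpha(x)=-(-x)^\alpha$ for $x<0$ (with $\phi_\alpha(0)=0$), and let $x+_{\phi_\alpha}y=\phi_\alpha^{-1}(\phi_\alpha(x)+\phi_\alpha(y))$. Let $P=\prod_{\alpha\in\mathbb R\setminus\{0\}}\mathbb R$ be the full direct product, with addition $(x_\alpha)+(y_\alpha)=(x_\alpha+_{\phi_\alpha}y_\alpha)$ and scalar multiplication $\lambda(x_\alpha)=(\lambda x_\alpha)$, $\lambda\in\mathbb R$. Then the quasi-kernel of $P$ is $Q(P)=\bigcup_{\alpha\in\mathbb R\setminus\{0\}}\mathbb R\mathbf e_\alpha$, where $\mathbf e_\alpha=(\delta_{\alpha,\beta})_{\beta}$, and consequently $P$ is not a near-vector space over $\mathbb R$.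
   Context: Here $\mathbb R$ is regarded as the scalar group $(\mathbb R,\cdot,1,0,-1)$. For an abelian group $V$ with an action of $(\mathbb R,\cdot)$ by endomorphisms, the quasi-kernel is $Q(V)=\{u:\forall a,b\in\mathbb R\ \exists\gamma\in\mathbb R,\ au+bu=\gamma u\}$. A near-vector space over $\mathbb R$ is such a $V$ in which $0,1,-1$ act as $0,\mathrm{id},-\mathrm{id}$, the action is free (for $u\ne0$, $au=bu\Rightarrow a=b$), and $Q(V)$ generates $V$ as an additive group. $\delta_{\alpha,\beta}$ is $1$ if $\alpha=\beta$ and $0$ otherwise. *)

theory Defs
  imports Complex_Main
begin

definition quasi_kernel ::
  "'v set \<Rightarrow> ('v \<Rightarrow> 'v \<Rightarrow> 'v) \<Rightarrow> (real \<Rightarrow> 'v \<Rightarrow> 'v) \<Rightarrow> 'v set" where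
  "quasi_kernel V add smult =
     {u \<in> V. \<forall>a b. \<exists>\<gamma>. add (smult a u) (smult b u) = smult \<gamma> u}"

inductive_set add_subgroup_gen ::
  "'v set \<Rightarrow> ('v \<Rightarrow> 'v \<Rightarrow> 'v) \<Rightarrow> 'v \<Rightarrow> 'v set \<Rightarrow> 'v set"
  for V add zero S where
  gen_zero: "zero \<in> add_subgroup_gen V add zero S"
| gen_base: "s \<in> S \<Longrightarrow> s \<in> add_subgroup_gen V add zero S"
| gen_add: "x \<in> add_subgroup_gen V add zero S \<Longrightarrow> y \<in> add_subgroup_gen V add zero S
     \<Longrightarrow> add x y \<in> add_subgroup_gen V add zero S"
| gen_neg: "x \<in> add_subgroup_gen V add zero S \<Longrightarrow> y \<in> V \<Longrightarrow> add x y = zero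
     \<Longrightarrow> y \<in> add_subgroup_gen V add zero S"

definition abelian_group_on :: "'v set \<Rightarrow> ('v \<Rightarrow> 'v \<Rightarrow> 'v) \<Rightarrow> 'v \<Rightarrow> bool" where
  "abelian_group_on V add zero \<longleftrightarrow>
     zero \<in> V \<and> (\<forall>x\<in>V. \<forall>y\<in>V. add x y \<in> V) \<and>
     (\<forall>x\<in>V. \<forall>y\<in>V. \<forall>z\<in>V. add (add x y) z = add x (add y z)) \<and>
     (\<forall>x\<in>V. \<forall>y\<in>V. add x y = add y x) \<and>
     (\<forall>x\<in>V. add zero x = x) \<and>
     (\<forall>x\<in>V. \<exists>y\<in>V. add x y = zero)"

definition near_vector_space ::
  "'v set \<Rightarrow> ('v \<Rightarrow> 'v \<Rightarrow> 'v) \<Rightarrow> 'v \<Rightarrow> (real \<Rightarrow> 'v \<Rightarrow> 'v) \<Rightarrow> bool" where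
  "near_vector_space V add zero smult \<longleftrightarrow>
     abelian_group_on V add zero \<and>
     (\<forall>a. \<forall>x\<in>V. smult a x \<in> V) \<and>
     (\<forall>a. \<forall>x\<in>V. \<forall>y\<in>V. smult a (add x y) = add (smult a x) (smult a y)) \<and>
     (\<forall>a b. \<forall>x\<in>V. smult (a * b) x = smult a (smult b x)) \<and>
     (\<forall>x\<in>V. smult 0 x = zero \<and> smult 1 x = x \<and> add x (smult (-1) x) = zero) \<and>
     (\<forall>u\<in>V. u \<noteq> zero \<longrightarrow> (\<forall>a b. smult a u = smult b u \<longrightarrow> a = b)) \<and>
     add_subgroup_gen V add zero (quasi_kernel V add smult) = V"

definition phi :: "real \<Rightarrow> real \<Rightarrow> real" where
  "phi \<alpha> x = (if x \<ge> 0 then x powr \<alpha> else - ((- x) powr \<alpha>))"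

text \<open>The product over the index set R - {0}, represented as functions real => real
  that vanish at the (excluded) index 0.\<close>
definition P_carrier :: "(real \<Rightarrow> real) set" where
  "P_carrier = {x. x 0 = 0}"

definition P_add :: "(real \<Rightarrow> real) \<Rightarrow> (real \<Rightarrow> real) \<Rightarrow> (real \<Rightarrow> real)" where
  "P_add x y = (\<lambda>\<alpha>. if \<alpha> = 0 then 0 else inv (phi \<alpha>) (phi \<alpha> (x \<alpha>) + phi \<alpha> (y \<alpha>)))"

definition P_zero :: "real \<Rightarrow> real" where
  "P_zero = (\<lambda>_. 0)"

definition P_smult :: "real \<Rightarrow> (real \<Rightarrow> real) \<Rightarrow> (real \<Rightarrow> real)" where
  "P_smult c x = (\<lambda>\<alpha>. c * x \<alpha>)"

definition unit_vec :: "real \<Rightarrow> real \<Rightarrow> real" where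
  "unit_vec \<alpha> = (\<lambda>\<beta>. if \<alpha> = \<beta> then 1 else 0)"

end

theory Submission
  imports Defs
begin

lemma phi_inv_comp:
  assumes "a \<noteq> 0" shows "phi (1/a) (phi a x) = x"
proof (cases "x \<ge> 0")
  case True
  then show ?thesis using assms
    by (cases "x = 0") (auto simp: phi_def powr_powr)
next
  case False
  then have "(-x) powr a > 0" by simp
  then show ?thesis using False assms by (auto simp: phi_def powr_powr)
qed

lemma phi_zero[simp]: "phi a 0 = 0" by (simp add: phi_def)

lemma phi_inv_eq:
  assumes "a \<noteq> 0" shows "inv (phi a) = phi (1/a)"
proof -
  have b: "1/a \<noteq> 0" using assms by simp
  have 1: "\<And>x. phi (1/a) (phi a x) = x" using phi_inv_comp[OF assms] .
  have 2: "\<And>y. phi a (phi (1/a) y) = y" using phi_inv_comp[OF b] by simp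
  show ?thesis
  proof (rule ext, rule inv_f_eq)
    show "inj (phi a)" by (rule inj_on_inverseI[where g="phi (1/a)"]) (simp add: 1)
  qed (simp add: 2)
qed

lemma phi_mult: "phi a (x*y) = phi a x * phi a y"
proof (cases "x = 0 \<or> y = 0")
  case True then show ?thesis by auto
next
  case False
  show ?thesis
  proof (cases "x > 0"; cases "y > 0")
    assume "x > 0" "y > 0" then show ?thesis by (simp add: phi_def powr_mult)
  next
    assume h: "x > 0" "\<not> y > 0"
    then have "y < 0" using False by simp
    then have "x*y < 0" using h by (simp add: mult_pos_neg)
    then show ?thesis using h \<open>y<0\<close> powr_mult[of x "-y" a] by (simp add: phi_def)
  next
    assume h: "\<not> x > 0" "y > 0"
    then have "x < 0" using False by simp
    then have "x*y < 0" using h by (simp add: mult_neg_pos)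
    then show ?thesis using h \<open>x<0\<close> powr_mult[of "-x" y a] by (simp add: phi_def)
  next
    assume h: "\<not> x > 0" "\<not> y > 0"
    then have "x < 0" "y < 0" using False by auto
    then have "x*y > 0" by (simp add: mult_neg_neg)
    then show ?thesis using \<open>x<0\<close> \<open>y<0\<close> powr_mult[of "-x" "-y" a] by (simp add: phi_def)
  qed
qed

definition cf :: "real \<Rightarrow> real \<Rightarrow> real \<Rightarrow> real" where
  "cf al a b = phi (1/al) (phi al a + phi al b)"

lemma key:
  assumes "al \<noteq> 0"
  shows "inv (phi al) (phi al (a*x) + phi al (b*x)) = cf al a b * x"
proof -
  have b: "1/al \<noteq> 0" using assms by simp
  have "phi al (a*x) + phi al (b*x) = phi al (cf al a b) * phi al x"
    unfolding cf_def phi_mult using phi_inv_comp[OF b] by (simp add: algebra_simps)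
  also have "\<dots> = phi al (cf al a b * x)" by (simp add: phi_mult)
  finally show ?thesis using phi_inv_comp[OF assms] by (simp add: phi_inv_eq[OF assms])
qed

lemma cf11: assumes "al \<noteq> 0" shows "cf al 1 1 = 2 powr (1/al)"
  using assms by (simp add: cf_def phi_def)

lemma inv_phi_zero: "al \<noteq> 0 \<Longrightarrow> inv (phi al) 0 = 0"
  by (simp add: phi_inv_eq)

lemma QK: "quasi_kernel P_carrier P_add P_smult =
           (\<Union>\<alpha>\<in>{\<alpha>::real. \<alpha> \<noteq> 0}. {P_smult c (unit_vec \<alpha>) | c. True})"
proof (rule set_eqI, rule iffI)
  fix u assume u: "u \<in> quasi_kernel P_carrier P_add P_smult"
  have u0: "u 0 = 0" using u unfolding quasi_kernel_def P_carrier_def by blast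
  have "\<forall>a b. \<exists>g. P_add (P_smult a u) (P_smult b u) = P_smult g u"
    using u unfolding quasi_kernel_def by blast
  then obtain g where g: "P_add (P_smult 1 u) (P_smult 1 u) = P_smult g u" by blast
  have comp: "\<And>al. al \<noteq> 0 \<Longrightarrow> u al \<noteq> 0 \<Longrightarrow> 2 powr (1/al) = g"
  proof -
    fix al :: real assume al: "al \<noteq> 0" "u al \<noteq> 0"
    have "P_add (P_smult 1 u) (P_smult 1 u) al = P_smult g u al" using g by simp
    then have "cf al 1 1 * u al = g * u al"
      using key[OF al(1), of 1 "u al" 1] al by (simp add: P_add_def P_smult_def)
    then show "2 powr (1/al) = g" using al cf11 by simp
  qed
  show "u \<in> (\<Union>\<alpha>\<in>{\<alpha>::real. \<alpha> \<noteq> 0}. {P_smult c (unit_vec \<alpha>) | c. True})"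
  proof (cases "\<exists>al. al \<noteq> 0 \<and> u al \<noteq> 0")
    case True
    then obtain al where al: "al \<noteq> 0" "u al \<noteq> 0" by blast
    have "u = P_smult (u al) (unit_vec al)"
    proof
      fix be show "u be = P_smult (u al) (unit_vec al) be"
      proof (cases "be = al \<or> be = 0 \<or> u be = 0")
        case True then show ?thesis using u0 al by (auto simp: P_smult_def unit_vec_def)
      next
        case False
        then have "be \<noteq> 0" "u be \<noteq> 0" by auto
        then have "2 powr (1/be) = 2 powr (1/al)" using comp[OF al] comp[of be] by simp
        then have "1/be = 1/al" using powr_inj[of 2 "1/be" "1/al"] by simp
        then show ?thesis using False by simp
      qed
    qed
    then show ?thesis using al by (intro UN_I[of al]) auto
  next
    case False
    have "\<forall>al. u al = 0"
    proof
      fix al show "u al = 0" using False u0 by (cases "al = 0") auto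
    qed
    then have "u = P_smult 0 (unit_vec 1)" by (auto simp: P_smult_def)
    then show ?thesis by (intro UN_I[of 1]) auto
  qed
next
  fix u assume "u \<in> (\<Union>\<alpha>\<in>{\<alpha>::real. \<alpha> \<noteq> 0}. {P_smult c (unit_vec \<alpha>) | c. True})"
  then obtain al c where al: "al \<noteq> 0" and u: "u = P_smult c (unit_vec al)" by blast
  have u0: "u 0 = 0" using al u by (simp add: P_smult_def unit_vec_def)
  have "P_add (P_smult a u) (P_smult b u) = P_smult (cf al a b) u" for a b
  proof
    fix be show "P_add (P_smult a u) (P_smult b u) be = P_smult (cf al a b) u be"
    proof (cases "be = 0")
      case True then show ?thesis using u0 by (simp add: P_add_def P_smult_def)
    next
      case False
      then have "P_add (P_smult a u) (P_smult b u) be = cf be a b * u be"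
        using key[OF False] by (simp add: P_add_def P_smult_def)
      then show ?thesis using u by (auto simp: P_smult_def unit_vec_def)
    qed
  qed
  then show "u \<in> quasi_kernel P_carrier P_add P_smult"
    using u0 by (auto simp: quasi_kernel_def P_carrier_def)
qed

lemma gen_finite:
  assumes "x \<in> add_subgroup_gen P_carrier P_add P_zero (quasi_kernel P_carrier P_add P_smult)"
  shows "finite {al. x al \<noteq> 0}"
  using assms
proof induction
  case gen_zero then show ?case by (simp add: P_zero_def)
next
  case (gen_base s)
  then obtain al c where "s = P_smult c (unit_vec al)" using QK by blast
  then have "{al. s al \<noteq> 0} \<subseteq> {al}" by (auto simp: P_smult_def unit_vec_def split: if_splits)
  then show ?case using finite_subset by blast
next
  case (gen_add x y)
  have "{al. P_add x y al \<noteq> 0} \<subseteq> {al. x al \<noteq> 0} \<union> {al. y al \<noteq> 0}"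
    by (auto simp: P_add_def inv_phi_zero)
  then show ?case using gen_add finite_subset by blast
next
  case (gen_neg x y)
  have "{al. y al \<noteq> 0} \<subseteq> {al. x al \<noteq> 0}"
  proof
    fix al assume a: "al \<in> {al. y al \<noteq> 0}"
    show "al \<in> {al. x al \<noteq> 0}"
    proof (rule ccontr)
      assume "al \<notin> {al. x al \<noteq> 0}"
      then have x0: "x al = 0" by simp
      have "P_add x y = P_zero" using gen_neg by blast
      then have "P_add x y al = 0" by (simp add: P_zero_def)
      moreover have "y \<in> P_carrier" using gen_neg by blast
      then have "al \<noteq> 0" using a by (auto simp: P_carrier_def)
      ultimately have "phi (1/al) (phi al (y al)) = 0" using x0
        by (simp add: P_add_def phi_inv_eq)
      then have "y al = 0" using phi_inv_comp[OF \<open>al \<noteq> 0\<close>] by simp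
      then show False using a by simp
    qed
  qed
  then show ?case using gen_neg finite_subset by blast
qed

theorem mainTheorem12:
  shows "quasi_kernel P_carrier P_add P_smult =
           (\<Union>\<alpha>\<in>{\<alpha>::real. \<alpha> \<noteq> 0}. {P_smult c (unit_vec \<alpha>) | c. True})
         \<and> \<not> near_vector_space P_carrier P_add P_zero P_smult"
proof
  show "quasi_kernel P_carrier P_add P_smult =
           (\<Union>\<alpha>\<in>{\<alpha>::real. \<alpha> \<noteq> 0}. {P_smult c (unit_vec \<alpha>) | c. True})" by (rule QK)
  show "\<not> near_vector_space P_carrier P_add P_zero P_smult"
  proof
    assume "near_vector_space P_carrier P_add P_zero P_smult"
    then have eq: "add_subgroup_gen P_carrier P_add P_zero (quasi_kernel P_carrier P_add P_smult) = P_carrier"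
      by (simp add: near_vector_space_def)
    define w :: "real \<Rightarrow> real" where "w = (\<lambda>al. if al = 0 then 0 else 1)"
    have "w \<in> P_carrier" by (simp add: w_def P_carrier_def)
    then have "finite {al. w al \<noteq> 0}" using gen_finite eq by blast
    moreover have "{al. w al \<noteq> 0} = - {0}" by (auto simp: w_def)
    moreover have "infinite (- {0::real})" by (simp add: infinite_UNIV_char_0 )
    ultimately show False by simp
  qed
qed

end
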